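(* For all integers $n\ge 2$ and $k\ge 0$, $$e(n,k)=e(n-2,k)+\binom{n-2}{k-1}+o(n-2,k-2),\qquad o(n,k)=o(n-2,k)+\binom{n-2}{k-1}+e(n-2,k-2),$$ where $e(m,k)=o(m,k)=0$ for $k<0$ and $\binom{m}{k}=0$ for $k<0$ or $k>m$.
   Context: For $S\subseteq\{1,\dots,n\}$ let $\sigma(S)$ be the sum of its elements; $S$ is called even if $\sigma(S)$ is even and odd otherwise (the empty set is even). A $k$-set is a subset with $k$ elements. $e(n,k)$ denotes the number of even $k$-subsets of $\{1,2,\dots,n\}$ and $o(n,k)$ the number of odd $k$-subsets of $\{1,2,\dots,n\}$ (both are $0$ if $k>n$). *)

theory Defs
  imports Main
begin

definition e_cnt :: "nat \<Rightarrow> int \<Rightarrow> nat" where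
  "e_cnt n k = (if k < 0 then 0 else
     card {S. S \<subseteq> {1..n} \<and> card S = nat k \<and> even (\<Sum>S)})"

definition o_cnt :: "nat \<Rightarrow> int \<Rightarrow> nat" where
  "o_cnt n k = (if k < 0 then 0 else
     card {S. S \<subseteq> {1..n} \<and> card S = nat k \<and> odd (\<Sum>S)})"

definition binom_int :: "nat \<Rightarrow> int \<Rightarrow> nat" where
  "binom_int m k = (if k < 0 then 0 else m choose (nat k))"

end

theory Submission
  imports Defs
begin

definition EE :: "nat \<Rightarrow> nat \<Rightarrow> bool \<Rightarrow> nat" where
  "EE m j p = card {S. S \<subseteq> {1..m} \<and> card S = j \<and> even (\<Sum>S) = p}"

lemma piece:
  fixes m :: nat and D :: "nat set"
  assumes D: "D \<subseteq> {Suc m, Suc (Suc m)}"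
  shows "card {S. S \<subseteq> {1..Suc (Suc m)} \<and> S \<inter> {Suc m, Suc (Suc m)} = D \<and> Q S}
       = card {T. T \<subseteq> {1..m} \<and> Q (T \<union> D)}"
proof -
  have "bij_betw (\<lambda>T. T \<union> D) {T. T \<subseteq> {1..m} \<and> Q (T \<union> D)}
        {S. S \<subseteq> {1..Suc (Suc m)} \<and> S \<inter> {Suc m, Suc (Suc m)} = D \<and> Q S}"
  proof (rule bij_betw_byWitness[where f' = "\<lambda>S. S - {Suc m, Suc (Suc m)}"])
    show "\<forall>T\<in>{T. T \<subseteq> {1..m} \<and> Q (T \<union> D)}. T \<union> D - {Suc m, Suc (Suc m)} = T"
      using D by (auto simp: subset_iff)
    show "\<forall>S\<in>{S. S \<subseteq> {1..Suc (Suc m)} \<and> S \<inter> {Suc m, Suc (Suc m)} = D \<and> Q S}. S - {Suc m, Suc (Suc m)} \<union> D = S"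
      by blast
    show "(\<lambda>T. T \<union> D) ` {T. T \<subseteq> {1..m} \<and> Q (T \<union> D)} \<subseteq>
        {S. S \<subseteq> {1..Suc (Suc m)} \<and> S \<inter> {Suc m, Suc (Suc m)} = D \<and> Q S}"
      using D by (auto simp: subset_iff)
    show "(\<lambda>S. S - {Suc m, Suc (Suc m)}) ` {S. S \<subseteq> {1..Suc (Suc m)} \<and> S \<inter> {Suc m, Suc (Suc m)} = D \<and> Q S}
        \<subseteq> {T. T \<subseteq> {1..m} \<and> Q (T \<union> D)}"
    proof
      fix x assume "x \<in> (\<lambda>S. S - {Suc m, Suc (Suc m)}) ` {S. S \<subseteq> {1..Suc (Suc m)} \<and> S \<inter> {Suc m, Suc (Suc m)} = D \<and> Q S}"
      then obtain S where S: "S \<subseteq> {1..Suc (Suc m)}" "S \<inter> {Suc m, Suc (Suc m)} = D" "Q S"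
        and x: "x = S - {Suc m, Suc (Suc m)}" by blast
      have "x \<union> D = S" using S x by blast
      moreover have "x \<subseteq> {1..m}" using S x by (auto simp: subset_iff)
      ultimately show "x \<in> {T. T \<subseteq> {1..m} \<and> Q (T \<union> D)}" using S by auto
    qed
  qed
  then show ?thesis by (simp add: bij_betw_same_card)
qed

lemma disj_facts:
  assumes "T \<subseteq> {1..m}" "D \<subseteq> {Suc m, Suc (Suc m)}"
  shows "card (T \<union> D) = card T + card D" "\<Sum>(T \<union> D) = \<Sum>T + \<Sum>D"
proof -
  have f: "finite T" using assms(1) finite_subset by blast
  have fd: "finite D" using assms(2) finite_subset by blast
  have "T \<inter> D = {}" using assms by (force simp: subset_iff)
  then show "card (T \<union> D) = card T + card D" "\<Sum>(T \<union> D) = \<Sum>T + \<Sum>D"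
    using f fd by (auto simp: card_Un_disjoint sum.union_disjoint)
qed

lemma key:
  "EE (Suc (Suc m)) j p = EE m j p + (if j \<ge> 1 then m choose (j-1) else 0)
     + (if j \<ge> 2 then EE m (j-2) (\<not>p) else 0)"
proof -
  let ?a = "Suc m" and ?b = "Suc (Suc m)"
  define Q where "Q S \<longleftrightarrow> card S = j \<and> even (\<Sum>S) = p" for S :: "nat set"
  define X where "X D = {S. S \<subseteq> {1..Suc (Suc m)} \<and> S \<inter> {?a, ?b} = D \<and> Q S}" for D
  have fin: "finite (X D)" for D unfolding X_def
    by (rule finite_subset[of _ "Pow {1..Suc (Suc m)}"]) auto
  have all: "{S. S \<subseteq> {1..Suc (Suc m)} \<and> Q S} = (X {} \<union> X {?a}) \<union> (X {?b} \<union> X {?a, ?b})"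
  proof (rule set_eqI, rule iffI)
    fix S assume S: "S \<in> {S. S \<subseteq> {1..Suc (Suc m)} \<and> Q S}"
    have "S \<inter> {?a, ?b} \<in> Pow {?a, ?b}" by blast
    also have "Pow {?a, ?b} = {{}, {?a}, {?b}, {?a, ?b}}" by (simp add: Pow_insert) blast
    finally have "S \<inter> {?a, ?b} = {} \<or> S \<inter> {?a, ?b} = {?a} \<or> S \<inter> {?a, ?b} = {?b} \<or> S \<inter> {?a, ?b} = {?a, ?b}"
      by blast
    then show "S \<in> (X {} \<union> X {?a}) \<union> (X {?b} \<union> X {?a, ?b})"
      using S unfolding X_def by blast
  qed (auto simp: X_def)
  have "EE (Suc (Suc m)) j p = card ((X {} \<union> X {?a}) \<union> (X {?b} \<union> X {?a, ?b}))"
    unfolding EE_def all[symmetric] Q_def by simp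
  also have "\<dots> = card (X {}) + card (X {?a}) + (card (X {?b}) + card (X {?a, ?b}))"
  proof -
    have d: "D1 \<noteq> D2 \<Longrightarrow> X D1 \<inter> X D2 = {}" for D1 D2 unfolding X_def by blast
    have "card (X {} \<union> X {?a}) = card (X {}) + card (X {?a})"
      by (rule card_Un_disjoint) (auto simp: fin d)
    moreover have "card (X {?b} \<union> X {?a, ?b}) = card (X {?b}) + card (X {?a, ?b})"
      by (rule card_Un_disjoint) (auto simp: fin d)
    moreover have "card ((X {} \<union> X {?a}) \<union> (X {?b} \<union> X {?a, ?b})) =
       card (X {} \<union> X {?a}) + card (X {?b} \<union> X {?a, ?b})"
    proof (rule card_Un_disjoint)
      show "(X {} \<union> X {?a}) \<inter> (X {?b} \<union> X {?a, ?b}) = {}"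
        using d[of "{}" "{?b}"] d[of "{}" "{?a,?b}"] d[of "{?a}" "{?b}"] d[of "{?a}" "{?a,?b}"]
        by auto
    qed (auto simp: fin)
    ultimately show ?thesis by simp
  qed
  finally have E: "EE (Suc (Suc m)) j p =
     card (X {}) + card (X {?a}) + (card (X {?b}) + card (X {?a, ?b}))" .
  have c0: "card (X {}) = EE m j p"
    unfolding X_def EE_def using piece[of "{}" m Q] by (simp add: Q_def)
  have c3: "card (X {?a, ?b}) = (if j \<ge> 2 then EE m (j-2) (\<not>p) else 0)"
  proof -
    have "card (X {?a, ?b}) = card {T. T \<subseteq> {1..m} \<and> Q (T \<union> {?a, ?b})}"
      unfolding X_def by (rule piece) auto
    also have "{T. T \<subseteq> {1..m} \<and> Q (T \<union> {?a, ?b})} =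
       {T. T \<subseteq> {1..m} \<and> card T + 2 = j \<and> even (\<Sum>T) = (\<not>p)}"
    proof -
      { fix T assume T: "T \<subseteq> {1..m}"
        have "Q (T \<union> {?a, ?b}) \<longleftrightarrow> card T + 2 = j \<and> even (\<Sum>T) = (\<not>p)"
          using disj_facts[OF T, of "{?a,?b}"] unfolding Q_def by auto }
      then show ?thesis by blast
    qed
    also have "card \<dots> = (if j \<ge> 2 then EE m (j-2) (\<not>p) else 0)"
      unfolding EE_def by (cases "j \<ge> 2") (auto intro: arg_cong[where f=card])
    finally show ?thesis .
  qed
  have c12: "card (X {?a}) + card (X {?b}) = (if j \<ge> 1 then m choose (j-1) else 0)"
  proof -
    have "card (X {?a}) = card {T. T \<subseteq> {1..m} \<and> Q (T \<union> {?a})}"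
      unfolding X_def by (rule piece) auto
    also have "{T. T \<subseteq> {1..m} \<and> Q (T \<union> {?a})} =
       {T. T \<subseteq> {1..m} \<and> card T + 1 = j \<and> even (\<Sum>T + ?a) = p}"
    proof -
      { fix T assume T: "T \<subseteq> {1..m}"
        have "Q (T \<union> {?a}) \<longleftrightarrow> card T + 1 = j \<and> even (\<Sum>T + ?a) = p"
          using disj_facts[OF T, of "{?a}"] unfolding Q_def by auto }
      then show ?thesis by blast
    qed
    finally have A: "card (X {?a}) = card {T. T \<subseteq> {1..m} \<and> card T + 1 = j \<and> even (\<Sum>T + ?a) = p}" .
    have "card (X {?b}) = card {T. T \<subseteq> {1..m} \<and> Q (T \<union> {?b})}"
      unfolding X_def by (rule piece) auto
    also have "{T. T \<subseteq> {1..m} \<and> Q (T \<union> {?b})} =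
       {T. T \<subseteq> {1..m} \<and> card T + 1 = j \<and> \<not> (even (\<Sum>T + ?a) = p)}"
    proof -
      { fix T assume T: "T \<subseteq> {1..m}"
        have "Q (T \<union> {?b}) \<longleftrightarrow> card T + 1 = j \<and> \<not> (even (\<Sum>T + ?a) = p)"
          using disj_facts[OF T, of "{?b}"] unfolding Q_def by auto }
      then show ?thesis by blast
    qed
    finally have B: "card (X {?b}) = card {T. T \<subseteq> {1..m} \<and> card T + 1 = j \<and> \<not> (even (\<Sum>T + ?a) = p)}" .
    let ?U = "{T. T \<subseteq> {1..m} \<and> card T + 1 = j}"
    have finU: "finite ?U" by (rule finite_subset[of _ "Pow {1..m}"]) auto
    have "card ?U = card {T. T \<subseteq> {1..m} \<and> card T + 1 = j \<and> even (\<Sum>T + ?a) = p}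
       + card {T. T \<subseteq> {1..m} \<and> card T + 1 = j \<and> \<not> (even (\<Sum>T + ?a) = p)}"
      apply (subst card_Un_disjoint[symmetric])
      using finU apply (auto intro: finite_subset)[3]
      by (rule arg_cong[where f=card]) auto
    moreover have "card ?U = (if j \<ge> 1 then m choose (j-1) else 0)"
    proof (cases "j \<ge> 1")
      case True
      then have "?U = {T. T \<subseteq> {1..m} \<and> card T = j - 1}" by auto
      then show ?thesis using True by (simp add: n_subsets)
    next
      case False then show ?thesis by simp
    qed
    ultimately show ?thesis using A B by simp
  qed
  show ?thesis using E c0 c3 c12 by simp
qed

lemma e_EE: "k \<ge> 0 \<Longrightarrow> e_cnt m k = EE m (nat k) True"
  by (simp add: e_cnt_def EE_def)
lemma o_EE: "k \<ge> 0 \<Longrightarrow> o_cnt m k = EE m (nat k) False"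
  by (simp add: o_cnt_def EE_def)

theorem lemma1p1:
  fixes n :: nat and k :: int
  assumes "n \<ge> 2" and "k \<ge> 0"
  shows "e_cnt n k = e_cnt (n - 2) k + binom_int (n - 2) (k - 1) + o_cnt (n - 2) (k - 2)
       \<and> o_cnt n k = o_cnt (n - 2) k + binom_int (n - 2) (k - 1) + e_cnt (n - 2) (k - 2)"
proof -
  obtain m where n: "n = Suc (Suc m)" using assms(1) by (metis add_2_eq_Suc le_Suc_ex)
  obtain j where k: "k = int j" using assms(2) nonneg_eq_int by blast
  have b: "binom_int m (k - 1) = (if j \<ge> 1 then m choose (j-1) else 0)"
    by (auto simp: binom_int_def k nat_diff_distrib)
  have eo: "e_cnt m (k-2) = (if j \<ge> 2 then EE m (j-2) True else 0)"
           "o_cnt m (k-2) = (if j \<ge> 2 then EE m (j-2) False else 0)"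
    by (auto simp: e_cnt_def o_cnt_def EE_def k nat_diff_distrib)
  show ?thesis
    using key[of m j True] key[of m j False] b eo
    by (simp add: n k e_EE o_EE)
qed

end
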